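(* Let $n\ge 2$. The set $\mathcal B=\{[in|jn] : i,j\in[n-1]\}$ is a lattice basis of the Veronese lattice $L_n=\ker_{\mathbb{Z}}(V_n)\subset\mathbb{Z}^{\binom{n+1}{2}}$.
   Context: $[n]=\{1,\dots,n\}$. $\mathbb{Z}^{\binom{n+1}{2}}$ has standard basis $e_{ij}$, $1\le i\le j\le n$, with the convention $e_{ij}=e_{ji}$. For $i,j,k,l\in[n]$, $[ij|kl]:=e_{ik}+e_{jl}-e_{il}-e_{jk}$ (note $[in|jn]=[jn|in]$). $V_n$ is the $n\times\binom{n+1}{2}$ integer matrix whose column indexed by $jk$ is $e_j+e_k\in\mathbb{Z}^n$. *)

theory Defs
  imports Main
begin

text \<open>Vectors of Z^(binom(n+1,2)) are modelled as functions nat \<times> nat \<Rightarrow> int,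
  indexed by pairs (i,j) with 1 \<le> i \<le> j \<le> n and vanishing elsewhere.\<close>

definition idx :: "nat \<Rightarrow> (nat \<times> nat) set" where
  "idx n = {(i,j). 1 \<le> i \<and> i \<le> j \<and> j \<le> n}"

definition evec :: "nat \<Rightarrow> nat \<Rightarrow> (nat \<times> nat \<Rightarrow> int)" where
  "evec i j = (\<lambda>p. if p = (min i j, max i j) then 1 else 0)"

definition brk :: "nat \<Rightarrow> nat \<Rightarrow> nat \<Rightarrow> nat \<Rightarrow> (nat \<times> nat \<Rightarrow> int)" where
  "brk i j k l = (\<lambda>p. evec i k p + evec j l p - evec i l p - evec j k p)"

text \<open>The matrix V_n applied to x: column jk is e_j + e_k.\<close>
definition Vmul :: "nat \<Rightarrow> (nat \<times> nat \<Rightarrow> int) \<Rightarrow> nat \<Rightarrow> int" where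
  "Vmul n x m = (\<Sum>p\<in>idx n. x p * (of_bool (fst p = m) + of_bool (snd p = m)))"

definition veronese_lattice :: "nat \<Rightarrow> (nat \<times> nat \<Rightarrow> int) set" where
  "veronese_lattice n = {x. (\<forall>p. p \<notin> idx n \<longrightarrow> x p = 0) \<and> (\<forall>m\<in>{1..n}. Vmul n x m = 0)}"

definition lattice_basis :: "('a \<Rightarrow> int) set \<Rightarrow> ('a \<Rightarrow> int) set \<Rightarrow> bool" where
  "lattice_basis B L \<longleftrightarrow> finite B \<and> B \<subseteq> L \<and>
     (\<forall>c. (\<lambda>p. \<Sum>b\<in>B. c b * b p) = (\<lambda>p. 0) \<longrightarrow> (\<forall>b\<in>B. c b = 0)) \<and>
     (\<forall>x\<in>L. \<exists>c. x = (\<lambda>p. \<Sum>b\<in>B. c b * b p))"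

definition Bset :: "nat \<Rightarrow> (nat \<times> nat \<Rightarrow> int) set" where
  "Bset n = {brk i n j n | i j. i \<in> {1..n-1} \<and> j \<in> {1..n-1}}"

end

theory Submission
  imports Defs
begin

definition Pn :: "nat \<Rightarrow> (nat \<times> nat) set" where
  "Pn n = {(i,j). 1 \<le> i \<and> i \<le> j \<and> j \<le> n - 1}"

definition phi :: "nat \<Rightarrow> nat \<times> nat \<Rightarrow> (nat \<times> nat \<Rightarrow> int)" where
  "phi n q = brk (fst q) n (snd q) n"

lemma finite_Pn: "finite (Pn n)"
proof -
  have "Pn n \<subseteq> {0..n} \<times> {0..n}" by (auto simp: Pn_def)
  then show ?thesis by (rule finite_subset) auto
qed

lemma brk_sym: "brk i n j n = brk j n i n"
  unfolding brk_def evec_def by (rule ext) (auto simp: min_def max_def)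

lemma Bset_eq: "Bset n = phi n ` Pn n"
proof
  show "Bset n \<subseteq> phi n ` Pn n"
  proof
    fix b assume "b \<in> Bset n"
    then obtain i j where b: "b = brk i n j n" "i \<in> {1..n-1}" "j \<in> {1..n-1}"
      unfolding Bset_def by blast
    have "b = phi n (min i j, max i j)"
      using b brk_sym[of i n j] by (auto simp: phi_def min_def max_def)
    moreover have "(min i j, max i j) \<in> Pn n" using b by (auto simp: Pn_def)
    ultimately show "b \<in> phi n ` Pn n" by blast
  qed
next
  show "phi n ` Pn n \<subseteq> Bset n"
    unfolding Bset_def Pn_def phi_def
    by auto (rule_tac x=a in exI, rule_tac x=b in exI, simp)
qed

lemma finite_idx: "finite (idx n)"
proof -
  have "idx n \<subseteq> {0..n} \<times> {0..n}" by (auto simp: idx_def)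
  then show ?thesis by (rule finite_subset) auto
qed

lemma phi_low:
  assumes "q \<in> Pn n" "p \<in> Pn n"
  shows "phi n q p = of_bool (q = p)"
  using assms unfolding Pn_def phi_def brk_def evec_def
  by (cases q, cases p) (auto simp: min_def max_def)

lemma inj_phi: "inj_on (phi n) (Pn n)"
proof
  fix q q' assume "q \<in> Pn n" "q' \<in> Pn n" "phi n q = phi n q'"
  then have "phi n q q = phi n q' q" by simp
  with \<open>q \<in> Pn n\<close> \<open>q' \<in> Pn n\<close> show "q = q'" by (simp add: phi_low)
qed

lemma phi_supp:
  assumes "q \<in> Pn n" "p \<notin> idx n" "n \<ge> 2"
  shows "phi n q p = 0"
  using assms unfolding Pn_def phi_def brk_def evec_def idx_def
  by (cases q, cases p) (auto simp: min_def max_def)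

lemma Vmul_evec:
  assumes "1 \<le> a" "a \<le> n" "1 \<le> b" "b \<le> n"
  shows "Vmul n (evec a b) m = of_bool (a = m) + of_bool (b = m)"
proof -
  let ?w = "\<lambda>p::nat\<times>nat. (of_bool (fst p = m) + of_bool (snd p = m)) :: int"
  have mem: "(min a b, max a b) \<in> idx n" using assms by (auto simp: idx_def)
  have "Vmul n (evec a b) m = (\<Sum>p\<in>idx n. if p = (min a b, max a b) then ?w p else 0)"
    unfolding Vmul_def evec_def by (rule sum.cong) auto
  also have "\<dots> = ?w (min a b, max a b)" using mem finite_idx
    by (simp add: sum.delta')
  also have "\<dots> = of_bool (a = m) + of_bool (b = m)"
    by (auto simp: min_def max_def)
  finally show ?thesis .
qed

lemma Vmul_brk:
  assumes "q \<in> Pn n" "n \<ge> 2"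
  shows "Vmul n (phi n q) m = 0"
proof -
  obtain i j where q: "q = (i,j)" "1 \<le> i" "i \<le> j" "j \<le> n - 1"
    using assms by (cases q) (auto simp: Pn_def)
  have "Vmul n (phi n q) m = Vmul n (evec i j) m + Vmul n (evec n n) m
      - Vmul n (evec i n) m - Vmul n (evec n j) m"
    unfolding Vmul_def phi_def brk_def q
    by (simp add: sum.distrib sum_subtractf algebra_simps)
  also have "\<dots> = 0" using q assms by (simp add: Vmul_evec)
  finally show ?thesis .
qed

lemma Vmul_lin:
  "Vmul n (\<lambda>p. \<Sum>q\<in>A. c q * f q p) m = (\<Sum>q\<in>A. c q * Vmul n (f q) m)"
  unfolding Vmul_def
  by (simp add: sum_distrib_left sum_distrib_right mult.assoc sum.swap[of _ A])

lemma Vmul_diff: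
  "Vmul n (\<lambda>p. f p - g p) m = Vmul n f m - Vmul n g m"
  unfolding Vmul_def by (simp add: sum_subtractf algebra_simps)

lemma idx_split:
  assumes "n \<ge> 2"
  shows "idx n = Pn n \<union> (\<lambda>k. (k, n)) ` {1..n}"
  using assms unfolding idx_def Pn_def by auto

theorem lemma2p1:
  fixes n :: nat
  assumes "n \<ge> 2"
  shows "lattice_basis (Bset n) (veronese_lattice n)"
proof -
  let ?P = "Pn n"
  have fin: "finite ?P" by (rule finite_Pn)
  have reidx: "(\<Sum>b\<in>Bset n. c b * b p) = (\<Sum>q\<in>?P. c (phi n q) * phi n q p)" for c p
    unfolding Bset_eq using inj_phi by (simp add: sum.reindex)
  have sub: "Bset n \<subseteq> veronese_lattice n"
    unfolding Bset_eq veronese_lattice_def using assms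
    by (auto simp: phi_supp Vmul_brk)
  have indep: "\<forall>c. (\<lambda>p. \<Sum>b\<in>Bset n. c b * b p) = (\<lambda>p. 0) \<longrightarrow> (\<forall>b\<in>Bset n. c b = 0)"
  proof (intro allI impI ballI)
    fix c b assume h: "(\<lambda>p. \<Sum>b\<in>Bset n. c b * b p) = (\<lambda>p. 0)" and b: "b \<in> Bset n"
    obtain q where q: "q \<in> ?P" "b = phi n q" using b unfolding Bset_eq by blast
    have "0 = (\<Sum>b\<in>Bset n. c b * b q)" using fun_cong[OF h, of q] by simp
    also have "\<dots> = (\<Sum>q'\<in>?P. if q' = q then c (phi n q') else 0)"
      unfolding reidx by (rule sum.cong) (auto simp: phi_low q)
    also have "\<dots> = c b" using q fin by (simp add: sum.delta')
    finally show "c b = 0" by simp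
  qed
  have span: "\<forall>x\<in>veronese_lattice n. \<exists>c. x = (\<lambda>p. \<Sum>b\<in>Bset n. c b * b p)"
  proof
    fix x assume x: "x \<in> veronese_lattice n"
    define c where "c = (\<lambda>b. x (inv_into ?P (phi n) b))"
    define s where "s = (\<lambda>p. \<Sum>q\<in>?P. x q * phi n q p)"
    have cs: "(\<lambda>p. \<Sum>b\<in>Bset n. c b * b p) = s"
      unfolding reidx s_def c_def
      by (rule ext, rule sum.cong) (auto simp: inv_into_f_f[OF inj_phi])
    define y where "y = (\<lambda>p. x p - s p)"
    have xo: "x p = 0" if "p \<notin> idx n" for p using x that by (cases p) (auto simp: veronese_lattice_def)
    have xv: "Vmul n x m = 0" if "m \<in> {1..n}" for m using x that by (auto simp: veronese_lattice_def)
    have so: "s p = 0" if "p \<notin> idx n" for p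
      unfolding s_def using that assms by (simp add: phi_supp)
    have sv: "Vmul n s m = 0" for m
      unfolding s_def Vmul_lin using assms by (simp add: Vmul_brk)
    have yP: "y p = 0" if "p \<in> ?P" for p
    proof -
      have "s p = (\<Sum>q\<in>?P. if q = p then x q else 0)"
        unfolding s_def by (rule sum.cong) (auto simp: phi_low that)
      also have "\<dots> = x p" using that fin by (simp add: sum.delta')
      finally show ?thesis by (simp add: y_def)
    qed
    have yo: "y p = 0" if "p \<notin> idx n" for p using xo so that by (simp add: y_def)
    have yv: "Vmul n y m = 0" if "m \<in> {1..n}" for m
      unfolding y_def Vmul_diff using xv sv that by simp
    have yS: "Vmul n y m = (\<Sum>k\<in>{1..n}. y (k,n) * (of_bool (k = m) + of_bool (n = m)))" for m
    proof -
      have "Vmul n y m = (\<Sum>p\<in>(\<lambda>k. (k, n)) ` {1..n}. y p * (of_bool (fst p = m) + of_bool (snd p = m)))"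
        unfolding Vmul_def
        by (rule sum.mono_neutral_right) (auto simp: idx_split[OF assms] yP fin)
      also have "\<dots> = (\<Sum>k\<in>{1..n}. y (k,n) * (of_bool (k = m) + of_bool (n = m)))"
        by (subst sum.reindex) (auto simp: inj_on_def)
      finally show ?thesis .
    qed
    have ylow: "y (m,n) = 0" if "1 \<le> m" "m < n" for m
    proof -
      have "0 = (\<Sum>k\<in>{1..n}. y (k,n) * (of_bool (k = m) + of_bool (n = m)))"
        using yv[of m] yS[of m] that by simp
      also have "\<dots> = (\<Sum>k\<in>{1..n}. if k = m then y (k,n) else 0)"
        by (rule sum.cong) (use that in auto)
      also have "\<dots> = y (m,n)" using that by (simp add: sum.delta')
      finally show ?thesis by simp
    qed
    have ytop: "y (n,n) = 0"
    proof -
      have "0 = (\<Sum>k\<in>{1..n}. y (k,n) * (of_bool (k = n) + of_bool (n = n)))"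
        using yv[of n] yS[of n] assms by simp
      also have "\<dots> = (\<Sum>k\<in>{1..n}. if k = n then 2 * y (k,n) else 0)"
        by (rule sum.cong) (auto simp: ylow)
      also have "\<dots> = 2 * y (n,n)" using assms by (simp add: sum.delta')
      finally show ?thesis by simp
    qed
    have "y p = 0" for p
    proof (cases "p \<in> idx n")
      case True
      then consider "p \<in> ?P" | k where "p = (k,n)" "k \<in> {1..n}"
        unfolding idx_split[OF assms] by blast
      then show ?thesis
      proof cases
        case 1 then show ?thesis by (rule yP)
      next
        case 2 then show ?thesis
          by (cases "k = n") (auto simp: ylow ytop)
      qed
    qed (rule yo)
    then have "x = s" unfolding y_def by (auto simp: fun_eq_iff)
    then show "\<exists>c. x = (\<lambda>p. \<Sum>b\<in>Bset n. c b * b p)" using cs by metis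
  qed
  show ?thesis unfolding lattice_basis_def
    using sub indep span finite_Pn Bset_eq by auto
qed

end
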